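(* Let $\mu_{T}$ be the Möbius function of the poset $T_d$ of types of degree $d$. If $\tau\in T_d$ is ramified, then $\mu_T(\tau,(d^1))=0$.
   Context: A type of degree $d$ is a finite multiset of pairs $(b,m)$ of positive integers with $\sum bm=d$. $T_d$ is the set of types of degree $d$ with the partial order generated by elementary merges (replace two pairs $(d_1,m),(d_2,m)$ with equal second entry by $(d_1+d_2,m)$) and elementary forgets (replace a pair $(d_1,m_1)$ by $(d_1,m_1-a),(d_1,a)$ with $0<a<m_1$): $\tau\le\lambda$ iff $\lambda$ is obtained from $\tau$ by a finite sequence of such operations. Its unique maximal element is $(d^1)=\{(d,1)\}$. A type is unramified if all second entries equal $1$, and ramified otherwise. The Möbius function $\mu_T$ is defined by $\sum_{\tau\le\kappa\le\lambda}\mu_T(\kappa,\lambda)=\delta_{\tau,\lambda}$ for $\tau\le\lambda$. *)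

theory Defs
  imports Main "HOL-Library.Multiset"
begin

type_synonym typ_ms = "(nat \<times> nat) multiset"

definition is_type :: "nat \<Rightarrow> typ_ms \<Rightarrow> bool" where
  "is_type d t \<longleftrightarrow> (\<forall>p \<in># t. 0 < fst p \<and> 0 < snd p) \<and> (\<Sum>p\<in>#t. fst p * snd p) = d"

definition types :: "nat \<Rightarrow> typ_ms set" where
  "types d = {t. is_type d t}"

definition elem_merge :: "typ_ms \<Rightarrow> typ_ms \<Rightarrow> bool" where
  "elem_merge t l \<longleftrightarrow> (\<exists>A d1 d2 m. t = A + {#(d1, m), (d2, m)#} \<and> l = A + {#(d1 + d2, m)#})"

definition elem_forget :: "typ_ms \<Rightarrow> typ_ms \<Rightarrow> bool" where
  "elem_forget t l \<longleftrightarrow> (\<exists>A d1 m1 a. 0 < a \<and> a < m1 \<and>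
      t = A + {#(d1, m1)#} \<and> l = A + {#(d1, m1 - a), (d1, a)#})"

definition elem_step :: "typ_ms \<Rightarrow> typ_ms \<Rightarrow> bool" where
  "elem_step t l \<longleftrightarrow> elem_merge t l \<or> elem_forget t l"

definition type_le :: "nat \<Rightarrow> typ_ms \<Rightarrow> typ_ms \<Rightarrow> bool" where
  "type_le d t l \<longleftrightarrow> t \<in> types d \<and> l \<in> types d \<and> elem_step\<^sup>*\<^sup>* t l"

definition top_type :: "nat \<Rightarrow> typ_ms" where
  "top_type d = {#(d, 1)#}"

definition unramified :: "typ_ms \<Rightarrow> bool" where
  "unramified t \<longleftrightarrow> (\<forall>p \<in># t. snd p = 1)"

definition ramified :: "typ_ms \<Rightarrow> bool" where
  "ramified t \<longleftrightarrow> \<not> unramified t"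

definition mobius_T :: "nat \<Rightarrow> typ_ms \<Rightarrow> typ_ms \<Rightarrow> int" where
  "mobius_T d = (THE f. (\<forall>t l. type_le d t l \<longrightarrow>
        (\<Sum>k\<in>{k. type_le d t k \<and> type_le d k l}. f k l) = (if t = l then 1 else 0))
     \<and> (\<forall>t l. \<not> type_le d t l \<longrightarrow> f t l = 0))"

end

theory Submission
  imports Defs
begin

definition pos :: "typ_ms \<Rightarrow> bool" where
  "pos t \<longleftrightarrow> (\<forall>p \<in># t. 0 < fst p \<and> 0 < snd p)"

definition msr :: "typ_ms \<Rightarrow> nat" where
  "msr t = (\<Sum>p\<in>#t. snd p * snd p)"

lemma types_pos: "t \<in> types d \<Longrightarrow> pos t"
  by (simp add: types_def is_type_def pos_def)

lemma step_pos: "elem_step t l \<Longrightarrow> pos t \<Longrightarrow> pos l"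
  unfolding elem_step_def elem_merge_def elem_forget_def pos_def by fastforce

lemma step_msr: "elem_step t l \<Longrightarrow> pos t \<Longrightarrow> msr l < msr t"
proof -
  assume s: "elem_step t l" and p: "pos t"
  show ?thesis
  using s unfolding elem_step_def
  proof
    assume "elem_merge t l"
    then obtain A d1 d2 m where t: "t = A + {#(d1, m), (d2, m)#}" and l: "l = A + {#(d1 + d2, m)#}"
      unfolding elem_merge_def by blast
    have "0 < m" using p t by (auto simp: pos_def)
    then show ?thesis using t l by (simp add: msr_def)
  next
    assume "elem_forget t l"
    then obtain A d1 m1 a where a: "0 < a" "a < m1" and t: "t = A + {#(d1, m1)#}" and l: "l = A + {#(d1, m1 - a), (d1, a)#}"
      unfolding elem_forget_def by blast
    obtain b where b: "m1 = b + a" "0 < b" using a by (metis add.commute less_imp_add_positive)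
    have "(m1 - a) * (m1 - a) + a * a < m1 * m1" using b a by (simp add: algebra_simps)
    then show ?thesis using t l by (simp add: msr_def)
  qed
qed

lemma star_pos: "elem_step\<^sup>*\<^sup>* t l \<Longrightarrow> pos t \<Longrightarrow> pos l \<and> (msr l < msr t \<or> l = t)"
proof (induction rule: rtranclp_induct)
  case base then show ?case by simp
next
  case (step y z)
  then have "pos y" "msr y < msr t \<or> y = t" by auto
  moreover have "msr z < msr y" "pos z" using step_msr step_pos step(2) \<open>pos y\<close> by auto
  ultimately show ?case by auto
qed

lemma le_msr: "type_le d t k \<Longrightarrow> k \<noteq> t \<Longrightarrow> msr k < msr t"
  unfolding type_le_def using star_pos types_pos by blast

lemma tle_antisym: "type_le d t k \<Longrightarrow> type_le d k t \<Longrightarrow> k = t"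
  using le_msr by (metis less_asym)

lemma tle_trans: "type_le d t k \<Longrightarrow> type_le d k l \<Longrightarrow> type_le d t l"
  unfolding type_le_def by auto

lemma tle_refl: "t \<in> types d \<Longrightarrow> type_le d t t"
  unfolding type_le_def by auto

lemma finite_types: "finite (types d)"
proof -
  have "types d \<subseteq> (\<Union>n\<in>{0..d}. multisets_of_size ({1..d}\<times>{1..d}) n)"
  proof
    fix t assume "t \<in> types d"
    then have p: "\<forall>p\<in>#t. 0 < fst p \<and> 0 < snd p" and s: "(\<Sum>p\<in>#t. fst p * snd p) = d"
      by (auto simp: types_def is_type_def)
    have le: "fst p * snd p \<le> d" if P: "p \<in># t" for p
    proof -
      obtain A where "t = add_mset p A" using multi_member_split[OF P] by blast
      then show ?thesis using s by auto
    qed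
    have "set_mset t \<subseteq> {1..d}\<times>{1..d}"
    proof
      fix p assume "p \<in> set_mset t"
      then have p1: "0 < fst p" "0 < snd p" and p2: "fst p * snd p \<le> d" using p le[of p] by auto
      have "fst p \<le> fst p * snd p" "snd p \<le> fst p * snd p" using p1 by simp_all
      then have "fst p \<le> d" "snd p \<le> d" using p2 by linarith+
      then show "p \<in> {1..d}\<times>{1..d}" using p1 by (simp add: mem_Times_iff)
    qed
    moreover have "size t \<le> d"
    proof -
      have "size t = (\<Sum>p\<in>#t. (1::nat))" by (induction t) auto
      also have "\<dots> \<le> (\<Sum>p\<in>#t. fst p * snd p)"
        by (rule sum_mset_mono) (use p in \<open>auto simp: Suc_le_eq\<close>)
      finally show ?thesis using s by simp
    qed
    ultimately show "t \<in> (\<Union>n\<in>{0..d}. multisets_of_size ({1..d}\<times>{1..d}) n)"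
      by (auto simp: multisets_of_size_def)
  qed
  then show ?thesis by (rule finite_subset) auto
qed


definition ivl :: "nat \<Rightarrow> typ_ms \<Rightarrow> typ_ms \<Rightarrow> typ_ms set" where
  "ivl d t l = {k. type_le d t k \<and> type_le d k l}"

lemma finite_ivl: "finite (ivl d t l)"
  by (rule finite_subset[OF _ finite_types[of d]]) (auto simp: ivl_def type_le_def)

function mob :: "nat \<Rightarrow> typ_ms \<Rightarrow> typ_ms \<Rightarrow> int" where
  "mob d t l = (if type_le d t l then (if t = l then 1 else
      - (\<Sum>k\<in>ivl d t l - {t}. mob d k l)) else 0)"
  by auto
termination
  by (relation "measure (\<lambda>(d,t,l). msr t)") (auto simp: ivl_def intro: le_msr)

declare mob.simps[simp del]

lemma ivl_self: "t \<in> types d \<Longrightarrow> ivl d t t = {t}"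
  by (auto simp: ivl_def intro: tle_refl tle_antisym)

lemma mob_sum: assumes "type_le d t l"
  shows "(\<Sum>k\<in>ivl d t l. mob d k l) = (if t = l then 1 else 0)"
proof (cases "t = l")
  case True
  then have "t \<in> types d" using assms by (simp add: type_le_def)
  then show ?thesis using True by (simp add: ivl_self mob.simps[of d l l] tle_refl)
next
  case False
  have "t \<in> ivl d t l" using assms by (auto simp: ivl_def type_le_def)
  then have "(\<Sum>k\<in>ivl d t l. mob d k l) = mob d t l + (\<Sum>k\<in>ivl d t l - {t}. mob d k l)"
    by (simp add: finite_ivl sum.remove)
  also have "\<dots> = 0" using False assms by (simp add: mob.simps[of d t l])
  finally show ?thesis using False by simp
qed

lemma mobius_T_eq: "mobius_T d = mob d"
  unfolding mobius_T_def
proof (rule the_equality)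
  show "(\<forall>t l. type_le d t l \<longrightarrow>
        (\<Sum>k\<in>{k. type_le d t k \<and> type_le d k l}. mob d k l) = (if t = l then 1 else 0))
     \<and> (\<forall>t l. \<not> type_le d t l \<longrightarrow> mob d t l = 0)"
    using mob_sum by (auto simp: ivl_def mob.simps)
next
  fix f :: "typ_ms \<Rightarrow> typ_ms \<Rightarrow> int" assume f: "(\<forall>t l. type_le d t l \<longrightarrow>
        (\<Sum>k\<in>{k. type_le d t k \<and> type_le d k l}. f k l) = (if t = l then 1 else 0))
     \<and> (\<forall>t l. \<not> type_le d t l \<longrightarrow> f t l = 0)"
  have "f t l = mob d t l" for t l
  proof (induction "msr t" arbitrary: t rule: less_induct)
    case less
    show ?case
    proof (cases "type_le d t l")
      case False then show ?thesis using f by (simp add: mob.simps)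
    next
      case True
      have tin: "t \<in> ivl d t l" using True by (auto simp: ivl_def type_le_def)
      have "(\<Sum>k\<in>ivl d t l. f k l) = (if t = l then 1 else 0)" using f True by (simp add: ivl_def)
      then have e: "f t l + (\<Sum>k\<in>ivl d t l - {t}. f k l) = (if t = l then 1 else 0)"
        using tin by (simp add: finite_ivl sum.remove)
      have "(\<Sum>k\<in>ivl d t l - {t}. f k l) = (\<Sum>k\<in>ivl d t l - {t}. mob d k l)"
        by (rule sum.cong) (auto simp: ivl_def intro!: less le_msr)
      show ?thesis
      proof (cases "t = l")
        case True2: True
        have e0: "ivl d t l - {t} = {}" using True True2 by (auto simp: ivl_def dest: tle_antisym)
        have "f t l = 1" using e unfolding e0 using True2 by simp
        then show ?thesis using True True2 by (subst mob.simps) simp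
      next
        case False
        then show ?thesis using e True \<open>(\<Sum>k\<in>ivl d t l - {t}. f k l) = _\<close> by (simp add: mob.simps[of d t l])
      qed
    qed
  qed
  then show "f = mob d" by (intro ext)
qed


definition phi :: "typ_ms \<Rightarrow> typ_ms" where
  "phi t = sum_mset (image_mset (\<lambda>p. replicate_mset (snd p) (fst p, 1)) t)"

lemma rep_plus: "replicate_mset (m + n) x = replicate_mset m x + replicate_mset n x"
  by (induction m) auto

lemma phi_simps[simp]: "phi {#} = {#}" "phi (add_mset p t) = replicate_mset (snd p) (fst p, 1) + phi t"
  "phi (s + t) = phi s + phi t"
  by (auto simp: phi_def)

lemma step_ctx: assumes "elem_step t l" shows "elem_step (t + C) (l + C)"
proof -
  have "elem_merge t l \<or> elem_forget t l" using assms by (simp add: elem_step_def)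
  then show ?thesis
proof (elim disjE)
  assume "elem_merge t l"
  then obtain A d1 d2 m where t: "t = A + {#(d1, m), (d2, m)#}" and l: "l = A + {#(d1 + d2, m)#}"
    unfolding elem_merge_def by blast
  have "t + C = (A + C) + {#(d1, m), (d2, m)#}" "l + C = (A + C) + {#(d1 + d2, m)#}"
    using t l by (simp_all add: ac_simps)
  then show ?thesis unfolding elem_step_def elem_merge_def by blast
next
  assume "elem_forget t l"
  then obtain A d1 m1 a where a: "0 < a" "a < m1" and t: "t = A + {#(d1, m1)#}" and l: "l = A + {#(d1, m1 - a), (d1, a)#}"
    unfolding elem_forget_def by blast
  have "t + C = (A + C) + {#(d1, m1)#}" "l + C = (A + C) + {#(d1, m1 - a), (d1, a)#}"
    using t l by (simp_all add: ac_simps)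
  then show ?thesis using a unfolding elem_step_def elem_forget_def by blast
qed
qed

lemma star_ctx: "elem_step\<^sup>*\<^sup>* t l \<Longrightarrow> elem_step\<^sup>*\<^sup>* (t + C) (l + C)"
  by (induction rule: rtranclp_induct) (auto intro: rtranclp.rtrancl_into_rtrancl step_ctx)

lemma star_add: "elem_step\<^sup>*\<^sup>* s1 l1 \<Longrightarrow> elem_step\<^sup>*\<^sup>* s2 l2 \<Longrightarrow> elem_step\<^sup>*\<^sup>* (s1 + s2) (l1 + l2)"
proof -
  assume a: "elem_step\<^sup>*\<^sup>* s1 l1" "elem_step\<^sup>*\<^sup>* s2 l2"
  have "elem_step\<^sup>*\<^sup>* (s1 + s2) (l1 + s2)" using star_ctx[OF a(1)] .
  moreover have "elem_step\<^sup>*\<^sup>* (s2 + l1) (l2 + l1)" using star_ctx[OF a(2)] .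
  ultimately show ?thesis by (simp add: add.commute)
qed

lemma single_star: "0 < m \<Longrightarrow> elem_step\<^sup>*\<^sup>* {#(b, m)#} (replicate_mset m (b, 1))"
proof (induction m)
  case 0 then show ?case by simp
next
  case (Suc n)
  show ?case
  proof (cases n)
    case 0 then show ?thesis by simp
  next
    case (Suc k)
    have "elem_step {#(b, Suc n)#} ({#} + {#(b, Suc n - 1), (b, 1)#})"
      unfolding elem_step_def elem_forget_def using Suc by fastforce
    then have s1: "elem_step {#(b, Suc n)#} ({#(b, n)#} + {#(b, 1)#})" by (simp add: add_mset_commute)
    have "elem_step\<^sup>*\<^sup>* ({#(b, n)#} + {#(b, 1)#}) (replicate_mset n (b, 1) + {#(b, 1)#})"
      by (rule star_ctx) (use Suc.IH Suc in auto)
    with s1 show ?thesis by simp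
  qed
qed

lemma phi_star: "pos t \<Longrightarrow> elem_step\<^sup>*\<^sup>* t (phi t)"
proof (induction t)
  case empty then show ?case by simp
next
  case (add x t)
  then have "pos t" "0 < snd x" by (auto simp: pos_def)
  then have "elem_step\<^sup>*\<^sup>* ({#(fst x, snd x)#} + t) (replicate_mset (snd x) (fst x, 1) + phi t)"
    using add.IH by (intro star_add single_star)
  then show ?case by simp
qed

lemma merge_rep: "elem_step\<^sup>*\<^sup>* (replicate_mset m (a, 1) + replicate_mset m (b, 1)) (replicate_mset m (a + b, 1))"
proof (induction m)
  case 0 then show ?case by simp
next
  case (Suc m)
  have "elem_step ({#} + {#(a, 1), (b, 1)#}) ({#} + {#(a + b, 1)#})"
    unfolding elem_step_def elem_merge_def by blast
  then have "elem_step\<^sup>*\<^sup>* ({#(a, 1), (b, 1)#} + (replicate_mset m (a, 1) + replicate_mset m (b, 1)))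
      ({#(a + b, 1)#} + replicate_mset m (a + b, 1))"
    using Suc.IH by (intro star_add) auto
  then show ?case by (simp add: add_mset_commute)
qed

lemma phi_step: assumes "elem_step t l" shows "elem_step\<^sup>*\<^sup>* (phi t) (phi l)"
proof -
  have "elem_merge t l \<or> elem_forget t l" using assms by (simp add: elem_step_def)
  then show ?thesis
proof (elim disjE)
  assume "elem_merge t l"
  then obtain A d1 d2 m where t: "t = A + {#(d1, m), (d2, m)#}" and l: "l = A + {#(d1 + d2, m)#}"
    unfolding elem_merge_def by blast
  have "elem_step\<^sup>*\<^sup>* (phi A + (replicate_mset m (d1, 1) + replicate_mset m (d2, 1))) (phi A + replicate_mset m (d1 + d2, 1))"
    by (intro star_add merge_rep) auto
  then show ?thesis using t l by (simp add: add_ac)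
next
  assume "elem_forget t l"
  then obtain A d1 m1 a where a: "0 < a" "a < m1" and t: "t = A + {#(d1, m1)#}" and l: "l = A + {#(d1, m1 - a), (d1, a)#}"
    unfolding elem_forget_def by blast
  have "replicate_mset m1 (d1, Suc 0) = replicate_mset (m1 - a) (d1, Suc 0) + replicate_mset a (d1, Suc 0)"
    using a rep_plus[of "m1 - a" a "(d1, Suc 0)"] by simp
  then have "phi t = phi l" using t l by (simp add: add_ac)
  then show ?thesis by simp
qed
qed

lemma phi_mono: "elem_step\<^sup>*\<^sup>* t l \<Longrightarrow> elem_step\<^sup>*\<^sup>* (phi t) (phi l)"
  by (induction rule: rtranclp_induct) (auto dest: phi_step)

lemma phi_unram: "unramified (phi t)"
  by (induction t) (auto simp: unramified_def)

lemma phi_id: "unramified t \<Longrightarrow> phi t = t"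
  by (induction t) (auto simp: unramified_def)

lemma sum_rep: "(\<Sum>p\<in>#replicate_mset n x. f p) = n * (f x :: nat)"
  by (induction n) auto

lemma phi_sum: "(\<Sum>p\<in>#phi t. fst p * snd p) = (\<Sum>p\<in>#t. fst p * snd p)"
proof (induction t)
  case empty then show ?case by simp
next
  case (add x t)
  have "(\<Sum>p\<in>#phi (add_mset x t). fst p * snd p)
      = (\<Sum>p\<in>#replicate_mset (snd x) (fst x, 1). fst p * snd p) + (\<Sum>p\<in>#phi t. fst p * snd p)"
    by simp
  also have "\<dots> = snd x * fst x + (\<Sum>p\<in>#t. fst p * snd p)"
    by (simp only: sum_rep add.IH) simp
  finally show ?case by (simp add: mult.commute)
qed

lemma phi_pos: "\<forall>p \<in># t. 0 < fst p \<and> 0 < snd p \<Longrightarrow> \<forall>p \<in># phi t. 0 < fst p \<and> 0 < snd p"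
  by (induction t) auto

lemma phi_types: "t \<in> types d \<Longrightarrow> phi t \<in> types d"
  using phi_sum[of t] phi_pos[of t] by (simp add: types_def is_type_def)

lemma size_phi: "size (phi t) = (\<Sum>p\<in>#t. snd p)"
  by (induction t) auto

lemma ram_size: "ramified t \<Longrightarrow> pos t \<Longrightarrow> 2 \<le> size (phi t)"
proof -
  assume "ramified t" "pos t"
  then obtain p where p: "p \<in># t" "snd p \<noteq> 1" "0 < snd p" by (auto simp: ramified_def unramified_def pos_def)
  then obtain A where "t = add_mset p A" by (blast dest: multi_member_split)
  then show ?thesis using p by (simp add: size_phi)
qed


lemma main: "t \<in> types d \<Longrightarrow> ramified t \<Longrightarrow> mob d t (top_type d) = 0"
proof (induction "msr t" arbitrary: t rule: less_induct)
  case less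
  let ?T = "top_type d"
  have posT: "pos t" using less.prems types_pos by blast
  show ?case
  proof (cases "type_le d t ?T")
    case False then show ?thesis by (simp add: mob.simps)
  next
    case True
    have unT: "unramified ?T" by (simp add: top_type_def unramified_def)
    have tT: "t \<noteq> ?T" using less.prems(2) unT by (auto simp: ramified_def)
    have sz: "phi t \<noteq> ?T" using ram_size[OF less.prems(2) posT] by (auto simp: top_type_def)
    have pt: "phi t \<in> types d" using phi_types less.prems by blast
    have tpt: "type_le d t (phi t)" using phi_star posT less.prems pt by (simp add: type_le_def)
    have ptne: "phi t \<noteq> t" using phi_unram less.prems(2) by (metis ramified_def)
    have msrpt: "msr (phi t) < msr t" using le_msr[OF tpt ptne] .
    let ?U = "ivl d t ?T - {t}" and ?V = "ivl d (phi t) ?T"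
    have zeroU: "mob d k ?T = 0" if "k \<in> ?U" "\<not> unramified k" for k
      using that by (intro less) (auto simp: ivl_def type_le_def ramified_def intro: le_msr)
    have zeroV: "mob d k ?T = 0" if "k \<in> ?V" "\<not> unramified k" for k
    proof -
      have "type_le d t k" using that tpt by (auto simp: ivl_def intro: tle_trans)
      moreover have "k \<noteq> t" using that(1) ptne tpt tle_antisym by (auto simp: ivl_def intro: tle_trans)
      ultimately show ?thesis using that by (intro less) (auto simp: ivl_def type_le_def ramified_def intro: le_msr)
    qed
    have e1: "(\<Sum>k\<in>?U. mob d k ?T) = (\<Sum>k\<in>{k\<in>?U. unramified k}. mob d k ?T)"
      by (rule sum.mono_neutral_right) (use zeroU finite_ivl in auto)
    have e2: "(\<Sum>k\<in>?V. mob d k ?T) = (\<Sum>k\<in>{k\<in>?V. unramified k}. mob d k ?T)"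
      by (rule sum.mono_neutral_right) (use zeroV finite_ivl in auto)
    have seteq: "{k\<in>?U. unramified k} = {k\<in>?V. unramified k}"
    proof (intro set_eqI iffI)
      fix k assume k: "k \<in> {k\<in>?U. unramified k}"
      then have "type_le d t k" by (auto simp: ivl_def)
      then have "elem_step\<^sup>*\<^sup>* (phi t) (phi k)" "k \<in> types d" by (auto simp: type_le_def intro: phi_mono)
      then have "type_le d (phi t) k" using phi_id k pt by (auto simp: type_le_def)
      then show "k \<in> {k\<in>?V. unramified k}" using k by (auto simp: ivl_def)
    next
      fix k assume k: "k \<in> {k\<in>?V. unramified k}"
      then have "type_le d t k" using tpt by (auto simp: ivl_def intro: tle_trans)
      moreover have "k \<noteq> t" using k less.prems(2) by (auto simp: ramified_def)
      ultimately show "k \<in> {k\<in>?U. unramified k}" using k by (auto simp: ivl_def)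
    qed
    have V0: "(\<Sum>k\<in>?V. mob d k ?T) = 0"
    proof (cases "type_le d (phi t) ?T")
      case True then show ?thesis using mob_sum[OF True] sz by simp
    next
      case False
      then have "?V = {}" by (auto simp: ivl_def intro: tle_trans)
      then show ?thesis by simp
    qed
    have "mob d t ?T = - (\<Sum>k\<in>?U. mob d k ?T)" using True tT by (subst mob.simps) simp
    then show ?thesis using e1 e2 seteq V0 by simp
  qed
qed

theorem proposition4:
  fixes d :: nat and \<tau> :: "(nat \<times> nat) multiset"
  assumes "\<tau> \<in> types d" and "ramified \<tau>"
  shows "mobius_T d \<tau> (top_type d) = 0"
  using main[OF assms] by (simp add: mobius_T_eq)

end
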